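(* Let $\{\mathcal{C}_n\}$ be a sequence of binary linear codes with blocklengths $N_n\to\infty$ and rates $r_n\to r$ for some $r\in(0,1)$. Suppose there is a constant $C>0$, independent of $p$ and $n$, such that the average EXIT function $h^{(n)}$ of $\mathcal{C}_n$ satisfies $$\frac{d h^{(n)}(p)}{dp}\ge C\log(N_n)\,h^{(n)}(p)\big(1-h^{(n)}(p)\big)\quad\text{for all }0<p<1,$$ and suppose the minimum distances $d^{(n)}_{\min}$ satisfy $\lim_{n\to\infty}\frac{\log d^{(n)}_{\min}}{\log N_n}=1$. Then $\{\mathcal{C}_n\}$ is capacity achieving on the BEC under block-MAP decoding.
   Context: Binary linear codes are assumed proper and of minimum distance at least $2$; rate $=K/N$; $\log$ is the natural logarithm. A uniform codeword $\underline{X}$ is sent over $\mathrm{BEC}(p)$ (each bit erased independently with probability $p$), giving $\underline{Y}$. The average EXIT function is $h(p)=\frac1N\sum_{i=1}^N H(X_i\mid\underline{Y}_{\sim i})$ (entropy in bits; $\underline{Y}_{\sim i}$ omits coordinate $i$). The block-MAP erasure probability $P_B(p)$ is the probability that $\underline{X}$ is not uniquely determined by $\underline{Y}$. A sequence of codes with rates $r_n\to r\in(0,1)$ is capacity achieving on the BEC under block-MAP decoding if $\lim_n P_B^{(n)}(p)=0$ for every $p\in[0,1-r)$. *)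

theory Defs
  imports "HOL-Analysis.Analysis"
begin

text \<open>A binary word of length N is represented by its support, a subset of {..<N};
  addition over GF(2) is symmetric difference.\<close>

definition sym_diff :: "nat set \<Rightarrow> nat set \<Rightarrow> nat set" where
  "sym_diff a b = (a - b) \<union> (b - a)"

definition binary_linear_code :: "nat \<Rightarrow> nat set set \<Rightarrow> bool" where
  "binary_linear_code N C \<longleftrightarrow> (\<forall>c\<in>C. c \<subseteq> {..<N}) \<and> {} \<in> C \<and>
     (\<forall>a\<in>C. \<forall>b\<in>C. sym_diff a b \<in> C)"

definition proper_code :: "nat \<Rightarrow> nat set set \<Rightarrow> bool" where
  "proper_code N C \<longleftrightarrow> (\<forall>i<N. \<exists>c\<in>C. i \<in> c)"

definition min_dist :: "nat set set \<Rightarrow> nat" where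
  "min_dist C = Min (card ` (C - {{}}))"

definition code_rate :: "nat \<Rightarrow> nat set set \<Rightarrow> real" where
  "code_rate N C = log 2 (real (card C)) / real N"

definition erasure_prob :: "nat \<Rightarrow> real \<Rightarrow> nat set \<Rightarrow> real" where
  "erasure_prob N p E = p ^ card E * (1 - p) ^ (N - card E)"

text \<open>Joint law of (uniform codeword X, erasure pattern E) on the finite sample space
  C \<times> Pow {..<N}.\<close>
definition joint_w :: "nat \<Rightarrow> nat set set \<Rightarrow> real \<Rightarrow> nat set \<times> nat set \<Rightarrow> real" where
  "joint_w N C p = (\<lambda>(x, E). erasure_prob N p E / real (card C))"

definition sample_space :: "nat \<Rightarrow> nat set set \<Rightarrow> (nat set \<times> nat set) set" where
  "sample_space N C = C \<times> Pow {..<N}"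

definition cond_entropy :: "'w set \<Rightarrow> ('w \<Rightarrow> real) \<Rightarrow> ('w \<Rightarrow> 'a) \<Rightarrow> ('w \<Rightarrow> 'b) \<Rightarrow> real" where
  "cond_entropy \<Omega> w A B =
     - (\<Sum>\<omega>\<in>\<Omega>. w \<omega> * log 2
          ((\<Sum>\<omega>'\<in>{\<omega>'\<in>\<Omega>. A \<omega>' = A \<omega> \<and> B \<omega>' = B \<omega>}. w \<omega>') /
           (\<Sum>\<omega>'\<in>{\<omega>'\<in>\<Omega>. B \<omega>' = B \<omega>}. w \<omega>')))"

text \<open>Channel output Y for codeword x and erasure pattern E: the erased positions
  together with the unerased codeword bits.\<close>
definition channel_out :: "nat \<Rightarrow> nat set \<times> nat set \<Rightarrow> nat set \<times> nat set" where
  "channel_out N = (\<lambda>(x, E). (E, x \<inter> ({..<N} - E)))"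

text \<open>Y with coordinate i omitted.\<close>
definition channel_out_ext :: "nat \<Rightarrow> nat \<Rightarrow> nat set \<times> nat set \<Rightarrow> nat set \<times> nat set" where
  "channel_out_ext N i = (\<lambda>(x, E). (E - {i}, x \<inter> ({..<N} - E - {i})))"

definition exit_fun :: "nat \<Rightarrow> nat set set \<Rightarrow> real \<Rightarrow> real" where
  "exit_fun N C p = (1 / real N) * (\<Sum>i<N.
     cond_entropy (sample_space N C) (joint_w N C p) (\<lambda>(x, E). i \<in> x) (channel_out_ext N i))"

definition block_MAP_erasure :: "nat \<Rightarrow> nat set set \<Rightarrow> real \<Rightarrow> real" where
  "block_MAP_erasure N C p = (\<Sum>\<omega>\<in>sample_space N C.
     (if \<exists>x'\<in>C. x' \<noteq> fst \<omega> \<and> channel_out N (x', snd \<omega>) = channel_out N \<omega>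
      then joint_w N C p \<omega> else 0))"

definition capacity_achieving_BEC :: "(nat \<Rightarrow> nat) \<Rightarrow> (nat \<Rightarrow> nat set set) \<Rightarrow> real \<Rightarrow> bool" where
  "capacity_achieving_BEC N C r \<longleftrightarrow>
     (\<forall>p. 0 \<le> p \<and> p < 1 - r \<longrightarrow> (\<lambda>n. block_MAP_erasure (N n) (C n) p) \<longlonglongrightarrow> 0)"

end

theory Submission
  imports Defs
begin



lemma mem_sym_diff[simp]: "x \<in> sym_diff a b \<longleftrightarrow> (x \<in> a) \<noteq> (x \<in> b)"
  unfolding sym_diff_def by auto

lemma code_sub: "binary_linear_code N C \<Longrightarrow> c \<in> C \<Longrightarrow> c \<subseteq> {..<N}"
  unfolding binary_linear_code_def by auto

lemma code_empty: "binary_linear_code N C \<Longrightarrow> {} \<in> C"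
  unfolding binary_linear_code_def by auto

lemma code_sd: "binary_linear_code N C \<Longrightarrow> a \<in> C \<Longrightarrow> b \<in> C \<Longrightarrow> sym_diff a b \<in> C"
  unfolding binary_linear_code_def by auto

lemma code_finite: "binary_linear_code N C \<Longrightarrow> finite C"
  by (rule finite_subset[of C "Pow {..<N}"]) (auto dest: code_sub)

lemma code_card_pos: "binary_linear_code N C \<Longrightarrow> card C > 0"
  using code_finite code_empty card_gt_0_iff by blast

lemma sum_pow_Pow:
  fixes p :: real
  shows "finite A \<Longrightarrow> (\<Sum>E\<in>Pow A. p ^ card E * (1-p) ^ (card A - card E)) = 1"
proof (induction A rule: finite_induct)
  case empty
  then show ?case by simp
next
  case (insert a A)
  have fin: "finite (Pow A)" using insert by simp
  have disj: "Pow A \<inter> insert a ` Pow A = {}" using insert by auto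
  have inj: "inj_on (insert a) (Pow A)" using insert.hyps unfolding inj_on_def by (metis PowD insert_ident subsetD)
  have "(\<Sum>E\<in>Pow (insert a A). p ^ card E * (1-p) ^ (card (insert a A) - card E))
     = (\<Sum>E\<in>Pow A. p ^ card E * (1-p) ^ (card (insert a A) - card E))
       + (\<Sum>E\<in>insert a ` Pow A. p ^ card E * (1-p) ^ (card (insert a A) - card E))"
    unfolding Pow_insert by (rule sum.union_disjoint) (use fin disj in auto)
  also have "(\<Sum>E\<in>Pow A. p ^ card E * (1-p) ^ (card (insert a A) - card E))
      = (1-p) * (\<Sum>E\<in>Pow A. p ^ card E * (1-p) ^ (card A - card E))"
    unfolding sum_distrib_left
  proof (rule sum.cong)
    fix E assume "E \<in> Pow A"
    then have "card E \<le> card A" using insert by (simp add: card_mono)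
    then have "card (insert a A) - card E = Suc (card A - card E)" using insert by simp
    then show "p ^ card E * (1-p) ^ (card (insert a A) - card E) = (1-p) * (p ^ card E * (1-p) ^ (card A - card E))"
      by simp
  qed simp
  also have "(\<Sum>E\<in>insert a ` Pow A. p ^ card E * (1-p) ^ (card (insert a A) - card E))
      = (\<Sum>E\<in>Pow A. p ^ card (insert a E) * (1-p) ^ (card (insert a A) - card (insert a E)))"
    by (rule sum.reindex[OF inj, unfolded comp_def])
  also have "\<dots> = p * (\<Sum>E\<in>Pow A. p ^ card E * (1-p) ^ (card A - card E))"
    unfolding sum_distrib_left
  proof (rule sum.cong)
    fix E assume E: "E \<in> Pow A"
    then have "finite E" "a \<notin> E" using insert finite_subset by auto
    then show "p ^ card (insert a E) * (1-p) ^ (card (insert a A) - card (insert a E)) = p * (p ^ card E * (1-p) ^ (card A - card E))"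
      using insert by simp
  qed simp
  finally show ?case using insert.IH by simp
qed

lemma sum_P: "(\<Sum>E\<in>Pow {..<N}. erasure_prob N p E) = 1"
  unfolding erasure_prob_def using sum_pow_Pow[of "{..<N}" p] by simp

lemma P_nonneg: "0 \<le> p \<Longrightarrow> p \<le> 1 \<Longrightarrow> 0 \<le> erasure_prob N p E"
  unfolding erasure_prob_def by simp

lemma P_pos: "0 < p \<Longrightarrow> p < 1 \<Longrightarrow> 0 < erasure_prob N p E"
  unfolding erasure_prob_def by simp

lemma sum_space:
  assumes "binary_linear_code N C"
  shows "(\<Sum>\<omega>\<in>sample_space N C. joint_w N C p \<omega> * g (snd \<omega>)) = (\<Sum>E\<in>Pow {..<N}. erasure_prob N p E * g E)"
proof -
  have "(\<Sum>\<omega>\<in>sample_space N C. joint_w N C p \<omega> * g (snd \<omega>))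
      = (\<Sum>x\<in>C. \<Sum>E\<in>Pow {..<N}. erasure_prob N p E / real (card C) * g E)"
    unfolding sample_space_def sum.cartesian_product' joint_w_def by simp
  also have "\<dots> = real (card C) * (\<Sum>E\<in>Pow {..<N}. erasure_prob N p E / real (card C) * g E)"
    by simp
  also have "\<dots> = (\<Sum>E\<in>Pow {..<N}. erasure_prob N p E * g E)"
    unfolding sum_distrib_left using code_card_pos[OF assms] by (auto intro!: sum.cong)
  finally show ?thesis .
qed




definition ud :: "nat set set \<Rightarrow> nat \<Rightarrow> nat set \<Rightarrow> bool" where
  "ud C i E \<longleftrightarrow> (\<exists>c\<in>C. i \<in> c \<and> c \<subseteq> insert i E)"

lemma entropy_formula:
  assumes code: "binary_linear_code N C" and p: "0<p" "p<1" and i: "i<N"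
  shows "cond_entropy (sample_space N C) (joint_w N C p) (\<lambda>(x,E). i \<in> x) (channel_out_ext N i)
       = (\<Sum>E\<in>Pow {..<N}. erasure_prob N p E * (if ud C i E then 1 else 0))"
proof -
  let ?U = "{..<N}" let ?\<Omega> = "sample_space N C" let ?w = "joint_w N C p"
  let ?A = "\<lambda>(x::nat set,E::nat set). i \<in> x" let ?B = "channel_out_ext N i"
  have finC: "finite C" using code_finite[OF code] .
  have cC: "real (card C) > 0" using code_card_pos[OF code] by simp
  have key: "log 2 ((\<Sum>\<omega>'\<in>{\<omega>'\<in>?\<Omega>. ?A \<omega>' = ?A \<omega> \<and> ?B \<omega>' = ?B \<omega>}. ?w \<omega>') / (\<Sum>\<omega>'\<in>{\<omega>'\<in>?\<Omega>. ?B \<omega>' = ?B \<omega>}. ?w \<omega>'))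
        = - (if ud C i (snd \<omega>) then 1 else 0)" if "\<omega> \<in> ?\<Omega>" for \<omega>
  proof -
    obtain x E where \<omega>: "\<omega> = (x,E)" by force
    have x: "x \<in> C" and E: "E \<subseteq> ?U" using that \<omega> unfolding sample_space_def by auto
    define S where "S = ?U - E - {i}"
    define XN where "XN = {x'\<in>C. x' \<inter> S = x \<inter> S \<and> (i \<in> x' \<longleftrightarrow> i \<in> x)}"
    define XD where "XD = {x'\<in>C. x' \<inter> S = x \<inter> S}"
    define Es where "Es = {E'\<in>Pow ?U. E' - {i} = E - {i}}"
    have Seq: "?U - E' - {i} = S" if "E' - {i} = E - {i}" for E'
      unfolding S_def using that by blast
    have chan: "(channel_out_ext N i (x',E') = channel_out_ext N i (x,E)) \<longleftrightarrow> (E' - {i} = E - {i} \<and> x' \<inter> S = x \<inter> S)" for x' E'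
    proof
      assume h: "channel_out_ext N i (x',E') = channel_out_ext N i (x,E)"
      then have e: "E'-{i} = E-{i}" and e2: "x' \<inter> (?U - E' - {i}) = x \<inter> (?U - E - {i})"
        by (simp_all add: channel_out_ext_def)
      show "E' - {i} = E - {i} \<and> x' \<inter> S = x \<inter> S" using e e2 Seq[OF e] unfolding S_def by simp
    next
      assume h: "E' - {i} = E - {i} \<and> x' \<inter> S = x \<inter> S"
      then show "channel_out_ext N i (x',E') = channel_out_ext N i (x,E)"
        using Seq[of E'] unfolding channel_out_ext_def S_def by simp
    qed
    have set1: "{\<omega>'\<in>?\<Omega>. ?A \<omega>' = ?A \<omega> \<and> ?B \<omega>' = ?B \<omega>} = XN \<times> Es"
    proof (rule set_eqI)
      fix z :: "nat set \<times> nat set" obtain x' E' where z: "z = (x',E')" by force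
      show "z \<in> {\<omega>'\<in>?\<Omega>. ?A \<omega>' = ?A \<omega> \<and> ?B \<omega>' = ?B \<omega>} \<longleftrightarrow> z \<in> XN \<times> Es"
        unfolding z \<omega> XN_def Es_def sample_space_def mem_Collect_eq chan by auto
    qed
    have set2: "{\<omega>'\<in>?\<Omega>. ?B \<omega>' = ?B \<omega>} = XD \<times> Es"
    proof (rule set_eqI)
      fix z :: "nat set \<times> nat set" obtain x' E' where z: "z = (x',E')" by force
      show "z \<in> {\<omega>'\<in>?\<Omega>. ?B \<omega>' = ?B \<omega>} \<longleftrightarrow> z \<in> XD \<times> Es"
        unfolding z \<omega> XD_def Es_def sample_space_def mem_Collect_eq chan by auto
    qed
    have sumprod: "(\<Sum>\<omega>'\<in>X \<times> Es. ?w \<omega>') = real (card X) * ((\<Sum>E'\<in>Es. erasure_prob N p E') / real (card C))" for X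
      unfolding sum.cartesian_product' joint_w_def by (simp add: sum_divide_distrib)
    have finEs: "finite Es" unfolding Es_def by simp
    have spos: "(\<Sum>E'\<in>Es. erasure_prob N p E') > 0"
      by (rule sum_pos2[OF finEs, of E]) (use E P_pos[OF p] in \<open>auto simp: Es_def intro: less_imp_le\<close>)
    have finXD: "finite XD" using finC unfolding XD_def by simp
    have sub: "XN \<subseteq> XD" unfolding XN_def XD_def by auto
    have xXN: "x \<in> XN" unfolding XN_def using x by simp
    have cXN: "card XN > 0" using xXN finite_subset[OF sub finXD] card_gt_0_iff by blast
    have ratio: "(\<Sum>\<omega>'\<in>{\<omega>'\<in>?\<Omega>. ?A \<omega>' = ?A \<omega> \<and> ?B \<omega>' = ?B \<omega>}. ?w \<omega>') / (\<Sum>\<omega>'\<in>{\<omega>'\<in>?\<Omega>. ?B \<omega>' = ?B \<omega>}. ?w \<omega>')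
        = real (card XN) / real (card XD)"
      unfolding set1 set2 sumprod using spos cC by (simp add: field_simps)
    show ?thesis
    proof (cases "ud C i E")
      case False
      have "XN = XD"
      proof
        show "XD \<subseteq> XN"
        proof
          fix x' assume x': "x' \<in> XD"
          have "sym_diff x x' \<in> C" using code_sd[OF code x] x' unfolding XD_def by simp
          moreover have "sym_diff x x' \<subseteq> insert i E"
          proof
            fix z assume z: "z \<in> sym_diff x x'"
            show "z \<in> insert i E"
            proof (rule ccontr)
              assume nz: "z \<notin> insert i E"
              have eq: "x' \<inter> S = x \<inter> S" using x' unfolding XD_def by simp
              have "z \<in> x \<union> x'" using z by auto
              then have "z \<in> S" using nz code_sub[OF code x] code_sub[OF code, of x'] x'
                unfolding XD_def S_def by auto
              then have "z \<in> x \<longleftrightarrow> z \<in> x'" using eq by blast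
              then show False using z by simp
            qed
          qed
          ultimately have "i \<notin> sym_diff x x'" using False unfolding ud_def by blast
          then show "x' \<in> XN" using x' unfolding XD_def XN_def by auto
        qed
      qed (rule sub)
      then show ?thesis using ratio \<omega> cXN False by simp
    next
      case True
      then obtain c where c: "c \<in> C" "i \<in> c" "c \<subseteq> insert i E" unfolding ud_def by blast
      have cS: "c \<inter> S = {}" using c unfolding S_def by auto
      define f where "f = (\<lambda>y. sym_diff y c)"
      have finXN: "finite XN" using finite_subset[OF sub finXD] .
      have invol: "f (f y) = y" for y unfolding f_def sym_diff_def by auto
      have inj: "inj_on f A" for A by (metis inj_onI invol)
      have f1: "f ` XN \<subseteq> XD - XN"
        using cS c code_sd[OF code _ c(1)] unfolding f_def XN_def XD_def by auto
      have f2: "f ` (XD - XN) \<subseteq> XN"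
        using cS c code_sd[OF code _ c(1)] unfolding f_def XN_def XD_def by auto
      have "card XN \<le> card (XD - XN)" by (rule card_inj_on_le[OF inj f1]) (use finXD in simp)
      moreover have "card (XD - XN) \<le> card XN" by (rule card_inj_on_le[OF inj f2 finXN])
      ultimately have "card (XD - XN) = card XN" by simp
      moreover have "card XD = card XN + card (XD - XN)"
        using card_Diff_subset[OF finXN sub] card_mono[OF finXD sub] by simp
      ultimately have "card XD = 2 * card XN" by simp
      then have "real (card XN) / real (card XD) = 1/2" using cXN by simp
      then show ?thesis using ratio \<omega> True by (simp add: log_divide)
    qed
  qed
  have "cond_entropy ?\<Omega> ?w ?A ?B = (\<Sum>\<omega>\<in>?\<Omega>. ?w \<omega> * (if ud C i (snd \<omega>) then 1 else 0))"
    unfolding cond_entropy_def sum_negf[symmetric]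
    by (rule sum.cong) (simp_all add: key)
  also have "\<dots> = (\<Sum>E\<in>Pow {..<N}. erasure_prob N p E * (if ud C i E then 1 else 0))"
    by (rule sum_space[OF code])
  finally show ?thesis .
qed




lemma sum_ind_card: "finite A \<Longrightarrow> (\<Sum>i\<in>A. if Q i then 1 else 0) = real (card {i\<in>A. Q i})"
  by (simp add: sum.If_cases Int_def)

lemma exit_formula:
  assumes code: "binary_linear_code N C" and p: "0<p" "p<1"
  shows "exit_fun N C p = (1 / real N) * (\<Sum>i<N. \<Sum>E\<in>Pow {..<N}. erasure_prob N p E * (if ud C i E then 1 else 0))"
  unfolding exit_fun_def using entropy_formula[OF code p] by simp

lemma G_bounds:
  assumes "0 \<le> p" "p \<le> 1"
  shows "0 \<le> (\<Sum>i<N. \<Sum>E\<in>Pow {..<N}. erasure_prob N p E * (if ud C i E then 1 else 0))"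
    and "(\<Sum>i<N. \<Sum>E\<in>Pow {..<N}. erasure_prob N p E * (if ud C i E then 1 else 0)) \<le> real N"
proof -
  show "0 \<le> (\<Sum>i<N. \<Sum>E\<in>Pow {..<N}. erasure_prob N p E * (if ud C i E then 1 else 0))"
    using P_nonneg[OF assms] by (auto intro!: sum_nonneg)
  have "(\<Sum>i<N. \<Sum>E\<in>Pow {..<N}. erasure_prob N p E * (if ud C i E then 1 else 0))
      \<le> (\<Sum>i<N. \<Sum>E\<in>Pow {..<N}. erasure_prob N p E)"
    by (intro sum_mono) (simp add: P_nonneg[OF assms])
  also have "\<dots> = real N" using sum_P by simp
  finally show "(\<Sum>i<N. \<Sum>E\<in>Pow {..<N}. erasure_prob N p E * (if ud C i E then 1 else 0)) \<le> real N" .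
qed

lemma exit_bounds:
  assumes code: "binary_linear_code N C" and p: "0<p" "p<1"
  shows "0 \<le> exit_fun N C p" "exit_fun N C p \<le> 1"
  using G_bounds[of p N C] p unfolding exit_formula[OF code p]
  by (auto simp: divide_simps)

lemma pivot_card:
  assumes code: "binary_linear_code N C" and E: "E \<subseteq> {..<N}"
  shows "2 ^ card {i\<in>{..<N}. i \<notin> E \<and> ud C i E} \<le> card C"
proof -
  define Pv where "Pv = {i\<in>{..<N}. i \<notin> E \<and> ud C i E}"
  define V where "V = {..<N} - E"
  define \<rho> where "\<rho> = (\<lambda>c. c \<inter> V)"
  have "T \<subseteq> Pv \<longrightarrow> T \<in> \<rho> ` C" if "finite T" for T
    using that
  proof (induction T rule: finite_induct)
    case empty
    then show ?case using code_empty[OF code] unfolding \<rho>_def by force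
  next
    case (insert j T)
    show ?case
    proof
      assume h: "insert j T \<subseteq> Pv"
      then have "T \<in> \<rho> ` C" using insert.IH by blast
      then obtain c where c: "c \<in> C" "\<rho> c = T" by (auto elim!: imageE)
      have "j \<in> Pv" using h by simp
      then obtain d where d: "d \<in> C" "j \<in> d" "d \<subseteq> insert j E" and jV: "j \<in> V"
        unfolding Pv_def ud_def V_def by auto
      have dV: "d \<inter> V = {j}" using d jV unfolding V_def by auto
      have "\<rho> (sym_diff c d) = sym_diff (\<rho> c) (d \<inter> V)"
        unfolding \<rho>_def sym_diff_def by blast
      also have "\<dots> = insert j T" unfolding c(2) dV using insert.hyps(2) unfolding sym_diff_def by blast
      finally have "\<rho> (sym_diff c d) = insert j T" .
      then show "insert j T \<in> \<rho> ` C" using code_sd[OF code c(1) d(1)] by (metis imageI)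
    qed
  qed
  note fact = this
  have finPv: "finite Pv" unfolding Pv_def by simp
  have "Pow Pv \<subseteq> \<rho> ` C"
  proof
    fix T assume "T \<in> Pow Pv"
    then have "T \<subseteq> Pv" by simp
    moreover have "finite T" using finite_subset[OF \<open>T \<subseteq> Pv\<close> finPv] .
    ultimately show "T \<in> \<rho> ` C" using fact by blast
  qed
  then have "card (Pow Pv) \<le> card (\<rho> ` C)" by (rule card_mono[OF finite_imageI[OF code_finite[OF code]]])
  also have "\<dots> \<le> card C" by (rule card_image_le[OF code_finite[OF code]])
  finally show ?thesis using card_Pow[OF finPv] unfolding Pv_def by simp
qed

lemma pivot_log:
  assumes code: "binary_linear_code N C" and E: "E \<subseteq> {..<N}"
  shows "real (card {i\<in>{..<N}. i \<notin> E \<and> ud C i E}) \<le> log 2 (real (card C))"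
proof -
  let ?k = "card {i\<in>{..<N}. i \<notin> E \<and> ud C i E}"
  have "real (2 ^ ?k) \<le> real (card C)" using pivot_card[OF assms] by (simp only: of_nat_le_iff)
  then have "log 2 (2 ^ ?k) \<le> log 2 (real (card C))"
    using code_card_pos[OF code] by (subst log_le_cancel_iff) auto
  then show ?thesis by (simp add: log_pow_cancel)
qed

lemma one_minus_p_term:
  assumes p: "0<p" "p<1" and i: "i<N"
  shows "(1-p) * (\<Sum>E\<in>Pow {..<N}. erasure_prob N p E * (if ud C i E then 1 else 0))
       = (\<Sum>E\<in>Pow {..<N}. if i \<notin> E then erasure_prob N p E * (if ud C i E then 1 else 0) else 0)"
proof -
  let ?f = "\<lambda>E. erasure_prob N p E * (if ud C i E then 1 else 0)"
  define A0 where "A0 = {E\<in>Pow {..<N}. i \<notin> E}"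
  have split: "Pow {..<N} = A0 \<union> insert i ` A0"
  proof
    show "Pow {..<N} \<subseteq> A0 \<union> insert i ` A0"
    proof
      fix E assume E: "E \<in> Pow {..<N}"
      show "E \<in> A0 \<union> insert i ` A0"
      proof (cases "i \<in> E")
        case True
        then have e: "E = insert i (E - {i})" by blast
        have "E - {i} \<in> A0" using E unfolding A0_def by blast
        then show ?thesis using e by (metis UnI2 imageI)
      next
        case False then show ?thesis using E unfolding A0_def by blast
      qed
    qed
    show "A0 \<union> insert i ` A0 \<subseteq> Pow {..<N}" using i unfolding A0_def by blast
  qed
  have disj: "A0 \<inter> insert i ` A0 = {}" unfolding A0_def by auto
  have fin: "finite A0" unfolding A0_def by simp
  have inj: "inj_on (insert i) A0" unfolding A0_def inj_on_def by (metis insert_ident mem_Collect_eq)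
  have ins: "(1-p) * ?f (insert i E) = p * ?f E" if "E \<in> A0" for E
  proof -
    have E: "E \<subseteq> {..<N}" "i \<notin> E" using that unfolding A0_def by auto
    have fE: "finite E" using E finite_subset by blast
    have "card E \<le> card ({..<N} - {i})" using E by (intro card_mono) auto
    then have cE: "card E + 1 \<le> N" using i by simp
    have ci: "card (insert i E) = Suc (card E)" using fE E by simp
    have "N - card E = Suc (N - Suc (card E))" using cE by simp
    then have "(1-p) * erasure_prob N p (insert i E) = p * erasure_prob N p E"
      unfolding erasure_prob_def ci by simp
    moreover have "ud C i (insert i E) = ud C i E" unfolding ud_def by simp
    ultimately show ?thesis by simp
  qed
  have "(\<Sum>E\<in>Pow {..<N}. ?f E) = sum ?f A0 + sum ?f (insert i ` A0)"
    unfolding split by (rule sum.union_disjoint) (use fin disj in auto)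
  also have "sum ?f (insert i ` A0) = (\<Sum>E\<in>A0. ?f (insert i E))"
    by (rule sum.reindex[OF inj, unfolded comp_def])
  finally have "(1-p) * (\<Sum>E\<in>Pow {..<N}. ?f E) = (1-p) * sum ?f A0 + (\<Sum>E\<in>A0. (1-p) * ?f (insert i E))"
    by (simp add: algebra_simps sum_distrib_left)
  also have "(\<Sum>E\<in>A0. (1-p) * ?f (insert i E)) = p * sum ?f A0"
    unfolding sum_distrib_left using ins by (rule sum.cong[OF refl])
  also have "(1-p) * sum ?f A0 + p * sum ?f A0 = sum ?f A0" by (simp add: algebra_simps)
  also have "sum ?f A0 = (\<Sum>E\<in>Pow {..<N}. if i \<notin> E then ?f E else 0)"
    unfolding A0_def by (rule sum.inter_filter) simp
  finally show ?thesis .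
qed

lemma rate_bound:
  assumes code: "binary_linear_code N C" and p: "0<p" "p<1"
  shows "(1-p) * (\<Sum>i<N. \<Sum>E\<in>Pow {..<N}. erasure_prob N p E * (if ud C i E then 1 else 0))
      \<le> log 2 (real (card C))"
proof -
  have "(1-p) * (\<Sum>i<N. \<Sum>E\<in>Pow {..<N}. erasure_prob N p E * (if ud C i E then 1 else 0))
      = (\<Sum>i<N. \<Sum>E\<in>Pow {..<N}. if i \<notin> E then erasure_prob N p E * (if ud C i E then 1 else 0) else 0)"
    by (subst sum_distrib_left, rule sum.cong[OF refl]) (rule one_minus_p_term[OF p], simp)
  also have "\<dots> = (\<Sum>E\<in>Pow {..<N}. \<Sum>i<N. erasure_prob N p E * (if i \<notin> E \<and> ud C i E then 1 else 0))"
    by (subst sum.swap) (auto intro!: sum.cong)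
  also have "\<dots> = (\<Sum>E\<in>Pow {..<N}. erasure_prob N p E * real (card {i\<in>{..<N}. i \<notin> E \<and> ud C i E}))"
    by (simp add: sum_distrib_left[symmetric] sum_ind_card)
  also have "\<dots> \<le> (\<Sum>E\<in>Pow {..<N}. erasure_prob N p E * log 2 (real (card C)))"
    using pivot_log[OF code] P_nonneg[of p] p by (auto intro!: sum_mono mult_left_mono)
  also have "\<dots> = log 2 (real (card C))" using sum_P by (simp add: sum_distrib_right[symmetric])
  finally show ?thesis .
qed




definition blk :: "nat set set \<Rightarrow> nat set \<Rightarrow> bool" where
  "blk C E \<longleftrightarrow> (\<exists>c\<in>C. c \<noteq> {} \<and> c \<subseteq> E)"

lemma block_cond:
  assumes code: "binary_linear_code N C" and x: "x \<in> C" and E: "E \<subseteq> {..<N}"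
  shows "(\<exists>x'\<in>C. x' \<noteq> x \<and> channel_out N (x', E) = channel_out N (x,E)) \<longleftrightarrow> blk C E"
proof
  assume "\<exists>x'\<in>C. x' \<noteq> x \<and> channel_out N (x', E) = channel_out N (x,E)"
  then obtain x' where x': "x' \<in> C" "x' \<noteq> x" "channel_out N (x', E) = channel_out N (x,E)" by blast
  have eq: "x' \<inter> ({..<N} - E) = x \<inter> ({..<N} - E)" using x'(3) unfolding channel_out_def by simp
  have cC: "sym_diff x x' \<in> C" using code_sd[OF code x x'(1)] .
  have cne: "sym_diff x x' \<noteq> {}"
  proof
    assume "sym_diff x x' = {}"
    then have "x = x'" unfolding sym_diff_def by blast
    then show False using x'(2) by simp
  qed
  have csub: "sym_diff x x' \<subseteq> E"
  proof
    fix z assume z: "z \<in> sym_diff x x'"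
    show "z \<in> E"
    proof (rule ccontr)
      assume nz: "z \<notin> E"
      have "z \<in> x \<union> x'" using z by auto
      then have "z \<in> {..<N} - E" using nz code_sub[OF code x] code_sub[OF code x'(1)] by blast
      then have "z \<in> x \<longleftrightarrow> z \<in> x'" using eq by blast
      then show False using z by simp
    qed
  qed
  show "blk C E" unfolding blk_def using cC cne csub by blast
next
  assume "blk C E"
  then obtain c where c: "c \<in> C" "c \<noteq> {}" "c \<subseteq> E" unfolding blk_def by blast
  have x'C: "sym_diff x c \<in> C" using code_sd[OF code x c(1)] .
  obtain z where z: "z \<in> c" using c(2) by blast
  have ne: "sym_diff x c \<noteq> x"
  proof
    assume "sym_diff x c = x"
    then have "z \<in> sym_diff x c \<longleftrightarrow> z \<in> x" by simp
    then show False using z by simp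
  qed
  have "sym_diff x c \<inter> ({..<N} - E) = x \<inter> ({..<N} - E)"
    using c(3) unfolding sym_diff_def by blast
  then have "channel_out N (sym_diff x c, E) = channel_out N (x,E)" unfolding channel_out_def by simp
  then show "\<exists>x'\<in>C. x' \<noteq> x \<and> channel_out N (x', E) = channel_out N (x,E)" using x'C ne by blast
qed

lemma block_formula:
  assumes code: "binary_linear_code N C"
  shows "block_MAP_erasure N C p = (\<Sum>E\<in>Pow {..<N}. erasure_prob N p E * (if blk C E then 1 else 0))"
proof -
  have "block_MAP_erasure N C p = (\<Sum>\<omega>\<in>sample_space N C. joint_w N C p \<omega> * (if blk C (snd \<omega>) then 1 else 0))"
    unfolding block_MAP_erasure_def
  proof (rule sum.cong[OF refl])
    fix \<omega> assume "\<omega> \<in> sample_space N C"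
    then obtain x E where \<omega>: "\<omega> = (x,E)" "x \<in> C" "E \<subseteq> {..<N}" unfolding sample_space_def by auto
    show "(if \<exists>x'\<in>C. x' \<noteq> fst \<omega> \<and> channel_out N (x', snd \<omega>) = channel_out N \<omega> then joint_w N C p \<omega> else 0)
        = joint_w N C p \<omega> * (if blk C (snd \<omega>) then 1 else 0)"
      using block_cond[OF code \<omega>(2,3)] unfolding \<omega>(1) by simp
  qed
  also have "\<dots> = (\<Sum>E\<in>Pow {..<N}. erasure_prob N p E * (if blk C E then 1 else 0))"
    by (rule sum_space[OF code])
  finally show ?thesis .
qed

lemma dmin_le:
  assumes code: "binary_linear_code N C" and b: "blk C E"
  shows "min_dist C \<le> card {i\<in>{..<N}. ud C i E}"
proof -
  obtain c where c: "c \<in> C" "c \<noteq> {}" "c \<subseteq> E" using b unfolding blk_def by blast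
  have "min_dist C \<le> card c" unfolding min_dist_def
    by (rule Min_le) (use c code_finite[OF code] in auto)
  also have "card c \<le> card {i\<in>{..<N}. ud C i E}"
  proof (rule card_mono)
    show "c \<subseteq> {i\<in>{..<N}. ud C i E}" using c code_sub[OF code c(1)] unfolding ud_def by blast
  qed simp
  finally show ?thesis .
qed

lemma block_bound:
  assumes code: "binary_linear_code N C" and p: "0 \<le> p" "p \<le> 1"
  shows "real (min_dist C) * block_MAP_erasure N C p
     \<le> (\<Sum>i<N. \<Sum>E\<in>Pow {..<N}. erasure_prob N p E * (if ud C i E then 1 else 0))"
proof -
  have "real (min_dist C) * block_MAP_erasure N C p
      = (\<Sum>E\<in>Pow {..<N}. erasure_prob N p E * (real (min_dist C) * (if blk C E then 1 else 0)))"
    unfolding block_formula[OF code] sum_distrib_left by (simp add: algebra_simps)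
  also have "\<dots> \<le> (\<Sum>E\<in>Pow {..<N}. erasure_prob N p E * real (card {i\<in>{..<N}. ud C i E}))"
    using dmin_le[OF code] P_nonneg[OF p] by (intro sum_mono mult_left_mono) auto
  also have "\<dots> = (\<Sum>E\<in>Pow {..<N}. \<Sum>i<N. erasure_prob N p E * (if ud C i E then 1 else 0))"
    by (simp add: sum_distrib_left[symmetric] sum_ind_card)
  also have "\<dots> = (\<Sum>i<N. \<Sum>E\<in>Pow {..<N}. erasure_prob N p E * (if ud C i E then 1 else 0))"
    by (rule sum.swap)
  finally show ?thesis .
qed

lemma block_zero:
  assumes code: "binary_linear_code N C"
  shows "block_MAP_erasure N C 0 = 0"
  unfolding block_formula[OF code]
proof (rule sum.neutral, rule ballI)
  fix E assume E: "E \<in> Pow {..<N}"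
  show "erasure_prob N 0 E * (if blk C E then 1 else 0) = 0"
  proof (cases "E = {}")
    case True
    then have "\<not> blk C E" unfolding blk_def by blast
    then show ?thesis by simp
  next
    case False
    have "finite E" using E finite_subset by auto
    then have "card E > 0" using False by auto
    then show ?thesis unfolding erasure_prob_def by simp
  qed
qed




lemma h_mono:
  fixes h :: "real \<Rightarrow> real"
  assumes hb: "\<And>q. 0 < q \<Longrightarrow> q < 1 \<Longrightarrow> 0 \<le> h q \<and> h q \<le> 1"
    and hd: "\<And>q. 0 < q \<Longrightarrow> q < 1 \<Longrightarrow> h differentiable (at q) \<and> deriv h q \<ge> K * L * h q * (1 - h q)"
    and KL: "K > 0" "L \<ge> 0"
    and ab: "0 < a" "a \<le> b" "b < 1"
  shows "h a \<le> h b"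
proof (rule DERIV_nonneg_imp_nondecreasing[OF ab(2)])
  fix x assume x: "a \<le> x" "x \<le> b"
  then have x01: "0 < x" "x < 1" using ab by auto
  have "DERIV h x :> deriv h x" using hd[OF x01] DERIV_deriv_iff_real_differentiable by blast
  moreover have "0 \<le> K * L * h x * (1 - h x)" using hb[OF x01] KL by simp
  ultimately show "\<exists>y. DERIV h x :> y \<and> 0 \<le> y" using hd[OF x01] by (meson order_trans)
qed

lemma deriv_logit:
  fixes h :: "real \<Rightarrow> real"
  assumes dh: "DERIV h x :> d" and hx: "0 < h x" "h x < 1"
  shows "DERIV (\<lambda>q. ln (h q) - ln (1 - h q) - K * L * q) x :> (d / h x - (- d) / (1 - h x) - K * L)"
proof -
  have d1: "DERIV (\<lambda>q. ln (h q)) x :> 1 / h x * d"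
    by (rule DERIV_chain2[OF DERIV_ln_divide[OF hx(1)] dh])
  have d2': "DERIV (\<lambda>q. 1 - h q) x :> 0 - d" by (rule DERIV_diff[OF DERIV_const dh])
  have d2: "DERIV (\<lambda>q. ln (1 - h q)) x :> 1 / (1 - h x) * (0 - d)"
    by (rule DERIV_chain2[OF DERIV_ln_divide d2']) (use hx in simp)
  have d3: "DERIV (\<lambda>q. K * L * q) x :> K * L * 1" by (rule DERIV_cmult[OF DERIV_ident])
  have "DERIV (\<lambda>q. ln (h q) - ln (1 - h q) - K * L * q) x :> 1 / h x * d - 1 / (1 - h x) * (0 - d) - K * L * 1"
    by (rule DERIV_diff[OF DERIV_diff[OF d1 d2] d3])
  then show ?thesis by simp
qed

lemma sharp:
  fixes h :: "real \<Rightarrow> real"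
  assumes hb: "\<And>q. 0 < q \<Longrightarrow> q < 1 \<Longrightarrow> 0 \<le> h q \<and> h q \<le> 1"
    and hd: "\<And>q. 0 < q \<Longrightarrow> q < 1 \<Longrightarrow> h differentiable (at q) \<and> deriv h q \<ge> K * L * h q * (1 - h q)"
    and KL: "K > 0" "L \<ge> 0"
    and p: "0 < p" "0 < \<delta>" "p + \<delta> < 1"
    and th: "h (p + \<delta>) \<le> \<theta>" "0 < \<theta>" "\<theta> < 1"
  shows "h p \<le> \<theta> / (1 - \<theta>) * exp (- (K * L * \<delta>))"
proof (cases "h p = 0")
  case True
  then show ?thesis using th by simp
next
  case False
  then have hp: "h p > 0" using hb[of p] p by force
  have mono: "h a \<le> h b" if "0 < a" "a \<le> b" "b < 1" for a b
    by (rule h_mono[OF hb hd KL that])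
  have inner: "0 < h q \<and> h q < 1" if "p \<le> q" "q \<le> p + \<delta>" for q
    using mono[of p q] mono[of q "p+\<delta>"] that p th hp by force
  define \<phi> where "\<phi> = (\<lambda>q. ln (h q) - ln (1 - h q) - K * L * q)"
  have "\<phi> p \<le> \<phi> (p + \<delta>)"
  proof (rule DERIV_nonneg_imp_nondecreasing[of p "p + \<delta>" \<phi>])
    show "p \<le> p + \<delta>" using p by simp
    fix x assume x: "p \<le> x" "x \<le> p + \<delta>"
    then have x01: "0 < x" "x < 1" using p by auto
    have dh: "DERIV h x :> deriv h x" using hd[OF x01] DERIV_deriv_iff_real_differentiable by blast
    have hx: "0 < h x" "h x < 1" using inner[OF x] by auto
    have "DERIV \<phi> x :> (deriv h x / h x - (- deriv h x) / (1 - h x) - K * L)"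
      unfolding \<phi>_def by (rule deriv_logit[OF dh hx])
    moreover have "0 \<le> deriv h x / h x - (- deriv h x) / (1 - h x) - K * L"
    proof -
      have "deriv h x / h x - (- deriv h x) / (1 - h x) = deriv h x / (h x * (1 - h x))"
        using hx by (simp add: field_simps)
      moreover have "K * L \<le> deriv h x / (h x * (1 - h x))"
        using hd[OF x01] hx by (simp add: field_simps mult.assoc)
      ultimately show ?thesis by simp
    qed
    ultimately show "\<exists>y. DERIV \<phi> x :> y \<and> 0 \<le> y" by blast
  qed
  moreover have "ln (h (p+\<delta>)) - ln (1 - h (p+\<delta>)) \<le> ln \<theta> - ln (1 - \<theta>)"
    using inner[of "p+\<delta>"] th p by (simp add: diff_mono)
  ultimately have "ln (h p) - ln (1 - h p) \<le> ln \<theta> - ln (1 - \<theta>) - K * L * \<delta>"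
    unfolding \<phi>_def by (simp add: algebra_simps)
  then have "exp (ln (h p) - ln (1 - h p)) \<le> exp (ln \<theta> - ln (1 - \<theta>) - K * L * \<delta>)" by simp
  moreover have "exp (ln \<theta> - ln (1 - \<theta>) - K * L * \<delta>) = \<theta> / (1 - \<theta>) * exp (- (K * L * \<delta>))"
  proof -
    have "exp (ln \<theta>) = \<theta>" "exp (ln (1 - \<theta>)) = 1 - \<theta>" using th by simp_all
    then show ?thesis by (simp add: exp_diff exp_minus divide_inverse)
  qed
  moreover have "h p \<le> exp (ln (h p) - ln (1 - h p))"
    using inner[of p] p by (simp add: exp_diff field_simps)
  ultimately show ?thesis by linarith
qed




lemma h_rate:
  assumes code: "binary_linear_code N C" and p: "0<p" "p<1" and N: "N > 0"
  shows "(1-p) * exit_fun N C p \<le> code_rate N C"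
proof -
  have "(1-p) * exit_fun N C p = ((1-p) * (\<Sum>i<N. \<Sum>E\<in>Pow {..<N}. erasure_prob N p E * (if ud C i E then 1 else 0))) / real N"
    unfolding exit_formula[OF code p] by simp
  also have "\<dots> \<le> log 2 (real (card C)) / real N"
    using rate_bound[OF code p] N by (simp add: divide_right_mono)
  finally show ?thesis unfolding code_rate_def .
qed

lemma h_block:
  assumes code: "binary_linear_code N C" and p: "0<p" "p<1" and N: "N > 0"
  shows "real (min_dist C) * block_MAP_erasure N C p \<le> real N * exit_fun N C p"
  using block_bound[OF code, of p] p N unfolding exit_formula[OF code p] by simp

lemma block_nonneg:
  assumes code: "binary_linear_code N C" and p: "0 \<le> p" "p \<le> 1"
  shows "0 \<le> block_MAP_erasure N C p"
  unfolding block_formula[OF code] using P_nonneg[OF p] by (auto intro!: sum_nonneg)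

theorem theorem4:
  fixes N :: "nat \<Rightarrow> nat" and C :: "nat \<Rightarrow> nat set set" and r K :: real
  assumes codes: "\<And>n. binary_linear_code (N n) (C n)"
    and proper: "\<And>n. proper_code (N n) (C n)"
    and dmin2: "\<And>n. min_dist (C n) \<ge> 2"
    and len: "filterlim N at_top sequentially"
    and rate: "(\<lambda>n. code_rate (N n) (C n)) \<longlonglongrightarrow> r"
    and r: "0 < r" "r < 1"
    and K: "K > 0"
    and exit_deriv: "\<And>n p. 0 < p \<Longrightarrow> p < 1 \<Longrightarrow>
        exit_fun (N n) (C n) differentiable (at p) \<and>
        deriv (exit_fun (N n) (C n)) p \<ge>
          K * ln (real (N n)) * exit_fun (N n) (C n) p * (1 - exit_fun (N n) (C n) p)"
    and dist: "(\<lambda>n. ln (real (min_dist (C n))) / ln (real (N n))) \<longlonglongrightarrow> 1"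
  shows "capacity_achieving_BEC N C r"
  unfolding capacity_achieving_BEC_def
proof (intro allI impI)
  fix p :: real assume pr: "0 \<le> p \<and> p < 1 - r"
  show "(\<lambda>n. block_MAP_erasure (N n) (C n) p) \<longlonglongrightarrow> 0"
  proof (cases "p = 0")
    case True
    then show ?thesis using block_zero[OF codes] by simp
  next
    case False
    then have p0: "0 < p" using pr by simp
    define \<delta> where "\<delta> = (1 - r - p) / 2"
    define \<theta> where "\<theta> = (r + \<delta>/2) / (r + \<delta>)"
    define M where "M = \<theta> / (1 - \<theta>)"
    define \<epsilon> where "\<epsilon> = K * \<delta> / 2"
    have \<delta>: "0 < \<delta>" "p + \<delta> < 1" "1 - (p + \<delta>) = r + \<delta>" using pr r unfolding \<delta>_def by (auto simp: field_simps)
    have \<theta>: "0 < \<theta>" "\<theta> < 1" unfolding \<theta>_def using \<delta> r by (auto simp: field_simps)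
    have M: "M > 0" unfolding M_def using \<theta> by simp
    have \<epsilon>: "\<epsilon> > 0" unfolding \<epsilon>_def using K \<delta> by simp
    have realN: "filterlim (\<lambda>n. real (N n)) at_top sequentially"
      by (rule filterlim_compose[OF filterlim_real_sequentially len])
    have ev1: "eventually (\<lambda>n. real (N n) \<ge> 2) sequentially"
      using realN unfolding filterlim_at_top by blast
    have ev2: "eventually (\<lambda>n. code_rate (N n) (C n) < r + \<delta>/2) sequentially"
      by (rule order_tendstoD(2)[OF rate]) (use \<delta> in simp)
    have ev3: "eventually (\<lambda>n. ln (real (min_dist (C n))) / ln (real (N n)) > 1 - \<epsilon>) sequentially"
      by (rule order_tendstoD(1)[OF dist]) (use \<epsilon> in simp)
    have bound: "eventually (\<lambda>n. block_MAP_erasure (N n) (C n) p \<le> M * real (N n) powr (- \<epsilon>)) sequentially"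
      using ev1 ev2 ev3
    proof eventually_elim
      case (elim n)
      define h where "h = exit_fun (N n) (C n)"
      define Nn where "Nn = real (N n)"
      define d where "d = real (min_dist (C n))"
      have Nn: "Nn \<ge> 2" "N n > 0" using elim(1) unfolding Nn_def by auto
      have lnN: "ln Nn > 0" using Nn by simp
      have d: "d \<ge> 2" using dmin2[of n] unfolding d_def by simp
      have hb: "0 \<le> h q \<and> h q \<le> 1" if "0 < q" "q < 1" for q
        using exit_bounds[OF codes that] unfolding h_def by simp
      have hd: "h differentiable (at q) \<and> deriv h q \<ge> K * ln Nn * h q * (1 - h q)" if "0 < q" "q < 1" for q
        using exit_deriv[OF that, of n] unfolding h_def Nn_def by simp
      have "(r + \<delta>) * h (p + \<delta>) \<le> r + \<delta>/2"
        using h_rate[OF codes, of "p+\<delta>" n] \<delta> p0 Nn elim(2) unfolding h_def by simp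
      then have hp2: "h (p + \<delta>) \<le> \<theta>" unfolding \<theta>_def using \<delta> r by (simp add: field_simps)
      have hp: "h p \<le> M * exp (- (K * ln Nn * \<delta>))"
        unfolding M_def by (rule sharp[OF hb hd K _ p0 \<delta>(1,2) hp2 \<theta>]) (use lnN in simp_all)
      have ex: "exp (- (K * ln Nn * \<delta>)) = Nn powr (- (K * \<delta>))"
        using Nn by (simp add: powr_def algebra_simps)
      have blk: "d * block_MAP_erasure (N n) (C n) p \<le> Nn * h p"
        using h_block[OF codes p0, of n] \<delta> p0 Nn unfolding h_def Nn_def d_def by simp
      have "ln d > (1 - \<epsilon>) * ln Nn" using elim(3) lnN unfolding d_def Nn_def by (simp add: field_simps)
      then have "exp ((1 - \<epsilon>) * ln Nn) < exp (ln d)" by simp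
      then have dlow: "Nn powr (1 - \<epsilon>) < d" using Nn d by (simp add: powr_def)
      have pos: "Nn powr (1 - \<epsilon>) > 0" using Nn by simp
      have B0: "0 \<le> block_MAP_erasure (N n) (C n) p" using block_nonneg[OF codes, of p] p0 \<delta> by simp
      have "block_MAP_erasure (N n) (C n) p \<le> Nn * h p / d"
        using blk d by (simp add: field_simps)
      also have "\<dots> \<le> Nn * (M * Nn powr (- (K * \<delta>))) / Nn powr (1 - \<epsilon>)"
      proof (rule frac_le)
        show "0 \<le> Nn * (M * Nn powr (- (K * \<delta>)))" using Nn M by simp
        show "Nn * h p \<le> Nn * (M * Nn powr (- (K * \<delta>)))" using hp ex Nn by simp
        show "0 < Nn powr (1 - \<epsilon>)" by (rule pos)
        show "Nn powr (1 - \<epsilon>) \<le> d" using dlow by simp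
      qed
      also have "\<dots> = M * Nn powr (- \<epsilon>)"
      proof -
        have "Nn * Nn powr (- (K * \<delta>)) = Nn powr (1 - (K * \<delta>))"
        proof -
          have "Nn powr (1 - K*\<delta>) = Nn powr 1 * Nn powr (-(K*\<delta>))"
            using powr_add[of Nn 1 "-(K*\<delta>)"] by simp
          then show ?thesis using Nn by simp
        qed
        moreover have "Nn powr (1 - (K * \<delta>)) / Nn powr (1 - \<epsilon>) = Nn powr (- \<epsilon>)"
          using Nn by (simp add: powr_diff[symmetric] \<epsilon>_def)
        ultimately show ?thesis by (metis mult.left_commute times_divide_eq_right)
      qed
      finally show ?case unfolding Nn_def .
    qed
    have lower: "eventually (\<lambda>n. 0 \<le> block_MAP_erasure (N n) (C n) p) sequentially"
      using block_nonneg[OF codes, of p] pr r by (auto intro: always_eventually)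
    have lim: "(\<lambda>n. M * real (N n) powr (- \<epsilon>)) \<longlonglongrightarrow> 0"
      using tendsto_mult_right_zero[OF tendsto_neg_powr[OF _ realN]] \<epsilon> by simp
    show ?thesis by (rule tendsto_sandwich[OF lower bound tendsto_const lim])
  qed
qed


end
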